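(* Let $L$ be a frame and for $a\in L$ write $\mathfrak c_f(a)=\{x\in L\mid x\vee a=1\}$. Then: (1) $L$ is subfit if and only if for every $a\in L$ the supplement of $\mathfrak c_f(a)$ in $\mathsf{Filt}(L)$ equals ${\uparrow}a$, i.e. $\{b\in L\mid\forall x\in\mathfrak c_f(a),\ b\vee x=1\}={\uparrow}a$; (2) $L$ is a Boolean algebra if and only if for every $a\in L$, ${\uparrow}a\sqcap\mathfrak c_f(a)=L$, i.e. $\{f\wedge g\mid f\in{\uparrow}a,\ g\in\mathfrak c_f(a)\}=L$.
   Context: A frame is a complete lattice $L$ with $(\bigvee A)\wedge b=\bigvee_{a\in A}(a\wedge b)$. $L$ is subfit if for all $a,b$: whenever ($\forall c$, $a\vee c=1\Rightarrow b\vee c=1$) then $a\le b$. $\mathsf{Filt}(L)$ is the set of filters (nonempty up-closed subsets closed under finite meets) ordered by reverse inclusion $\sqsubseteq$; it is a coframe with least element $L$, greatest element $\{1\}$, binary meet $F\sqcap G=\{f\wedge g\mid f\in F,g\in G\}$, difference $H\setminus G=\{a\mid\forall b\in G,\ b\vee a\in H\}$, and supplement $F^\#=\{1\}\setminus F$. *)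

theory Defs
  imports Main
begin

definition frame :: "'a::complete_lattice itself \<Rightarrow> bool" where
  "frame _ \<longleftrightarrow> (\<forall>(A::'a set) b. inf (Sup A) b = Sup ((\<lambda>a. inf a b) ` A))"

definition subfit :: "'a::complete_lattice itself \<Rightarrow> bool" where
  "subfit _ \<longleftrightarrow> (\<forall>a b::'a. (\<forall>c. sup a c = top \<longrightarrow> sup b c = top) \<longrightarrow> a \<le> b)"

text \<open>A (bounded distributive) lattice is a Boolean algebra iff every element has a complement.\<close>
definition is_boolean :: "'a::complete_lattice itself \<Rightarrow> bool" where
  "is_boolean _ \<longleftrightarrow> (\<forall>a::'a. \<exists>c. inf a c = bot \<and> sup a c = top)"

text \<open>Operations on filters (Filt(L) ordered by reverse inclusion).\<close>
definition filt_meet :: "'a::complete_lattice set \<Rightarrow> 'a set \<Rightarrow> 'a set" where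
  "filt_meet F G = {inf f g | f g. f \<in> F \<and> g \<in> G}"

definition filt_diff :: "'a::complete_lattice set \<Rightarrow> 'a set \<Rightarrow> 'a set" where
  "filt_diff H G = {a. \<forall>b\<in>G. sup b a \<in> H}"

definition filt_supp :: "'a::complete_lattice set \<Rightarrow> 'a set" where
  "filt_supp F = filt_diff {top} F"

definition cf :: "'a::complete_lattice \<Rightarrow> 'a set" where
  "cf a = {x. sup x a = top}"

definition upset :: "'a::complete_lattice \<Rightarrow> 'a set" where
  "upset a = {b. a \<le> b}"

end

theory Submission
  imports Defs
begin

lemma frame_dist:
  assumes "frame TYPE('a::complete_lattice)"
  shows "inf (sup x y) b = sup (inf x b) (inf y (b::'a))"
proof -
  have "inf (Sup {x,y}) b = Sup ((\<lambda>a. inf a b) ` {x,y})"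
    using assms unfolding frame_def by blast
  thus ?thesis by simp
qed

theorem mainTheorem19:
  assumes "frame TYPE('a::complete_lattice)"
  shows "(subfit TYPE('a) \<longleftrightarrow> (\<forall>a::'a. filt_supp (cf a) = upset a))
       \<and> (is_boolean TYPE('a) \<longleftrightarrow> (\<forall>a::'a. filt_meet (upset a) (cf a) = UNIV))"
proof
  have S: "filt_supp (cf a) = {b. \<forall>x. sup x a = top \<longrightarrow> sup x b = top}" for a :: 'a
    unfolding filt_supp_def filt_diff_def cf_def by auto
  have U: "upset a \<subseteq> filt_supp (cf a)" for a :: 'a
  proof
    fix b assume "b \<in> upset a"
    hence "a \<le> b" by (simp add: upset_def)
    have "sup x b = top" if "sup x a = top" for x
    proof -
      have "sup x a \<le> sup x b" using \<open>a \<le> b\<close> by (rule sup_mono[OF order_refl])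
      thus ?thesis using that by (simp add: top_unique)
    qed
    thus "b \<in> filt_supp (cf a)" unfolding S by blast
  qed
  show "subfit TYPE('a) \<longleftrightarrow> (\<forall>a::'a. filt_supp (cf a) = upset a)"
  proof
    assume sf: "subfit TYPE('a)"
    show "\<forall>a::'a. filt_supp (cf a) = upset a"
    proof
      fix a :: 'a
      have "filt_supp (cf a) \<subseteq> upset a"
      proof
        fix b assume "b \<in> filt_supp (cf a)"
        hence "\<forall>c. sup a c = top \<longrightarrow> sup b c = top" unfolding S by (auto simp: sup_commute)
        thus "b \<in> upset a" using sf unfolding subfit_def upset_def by blast
      qed
      thus "filt_supp (cf a) = upset a" using U by blast
    qed
  next
    assume H: "\<forall>a::'a. filt_supp (cf a) = upset a"
    show "subfit TYPE('a)" unfolding subfit_def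
    proof (intro allI impI)
      fix a b :: 'a assume "\<forall>c. sup a c = top \<longrightarrow> sup b c = top"
      hence "b \<in> filt_supp (cf a)" unfolding S by (auto simp: sup_commute)
      thus "a \<le> b" using H by (simp add: upset_def)
    qed
  qed
next
  show "is_boolean TYPE('a) \<longleftrightarrow> (\<forall>a::'a. filt_meet (upset a) (cf a) = UNIV)"
  proof
    assume B: "is_boolean TYPE('a)"
    show "\<forall>a::'a. filt_meet (upset a) (cf a) = UNIV"
    proof (intro allI)
      fix a :: 'a
      obtain c where c: "inf a c = bot" "sup a c = top" using B unfolding is_boolean_def by blast
      have "y \<in> filt_meet (upset a) (cf a)" for y
      proof -
        have "inf (sup y a) (sup y c) = sup (inf y (sup y c)) (inf a (sup y c))"
          by (rule frame_dist[OF assms])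
        also have "inf a (sup y c) = sup (inf y a) (inf c a)"
          using frame_dist[OF assms, of y c a] by (simp add: inf_commute)
        also have "inf c a = bot" using c by (simp add: inf_commute)
        finally have e: "inf (sup y a) (sup y c) = y"
          by (simp add: sup_absorb1 inf_absorb1 le_supI1)
        have "sup (sup y c) a = top" using c
          by (metis sup.commute sup.left_commute sup_top_right)
        thus ?thesis unfolding filt_meet_def upset_def cf_def using e
          by (intro CollectI exI[of _ "sup y a"] exI[of _ "sup y c"]) auto
      qed
      thus "filt_meet (upset a) (cf a) = UNIV" by blast
    qed
  next
    assume H: "\<forall>a::'a. filt_meet (upset a) (cf a) = UNIV"
    show "is_boolean TYPE('a)" unfolding is_boolean_def
    proof
      fix a :: 'a
      have "bot \<in> filt_meet (upset a) (cf a)" using H by blast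
      then obtain f g where fg: "bot = inf f g" "a \<le> f" "sup g a = top"
        unfolding filt_meet_def upset_def cf_def by blast
      have "inf a g \<le> inf f g" using fg(2) by (simp add: le_infI1)
      hence "inf a g = bot" using fg(1) by (simp add: bot_unique)
      thus "\<exists>c. inf a c = bot \<and> sup a c = top" using fg(3) by (auto simp: sup_commute)
    qed
  qed
qed

end
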